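(* Let $d\ge1$, $m\in\mathbb{N}$ ($m\ge1$), and let $A_0,A_1\in\mathbb{R}^{d\times d}$ be constant matrices. Let $G:\mathbb{Z}_0^\infty\to\mathbb{R}^{d\times d}$ satisfy $A_1G(u)=G(u)A_1$ for all $u\in\mathbb{Z}_0^\infty$, and let $Z$ be the discrete function defined in the context. Then \[ X(u)=\sum_{r=1}^{u}Z(u-m-r)\,G(r-1),\qquad u\in\mathbb{Z}_{-m}^{\infty} \] (an empty sum being $\Theta$), is a solution of \[ \Delta X(u)=A_0X(u-m)+X(u-m)A_1+G(u),\ \ u\in\mathbb{Z}_0^{\infty},\qquad X(u)=\Theta,\ \ u\in\mathbb{Z}_{-m}^{0}. \]
   Context: $\Theta$ and $I$ denote the $d\times d$ zero and identity matrices; $\mathbb{Z}_a^b=\{a,a+1,\dots,b\}$ (with $\mathbb{Z}_a^\infty=\{a,a+1,\dots\}$ and $\mathbb{Z}_{-\infty}^b=\{\dots,b-1,b\}$); $\Delta X(u)=X(u+1)-X(u)$. For integers $a$ and $r\ge0$, $\binom{a}{r}=a(a-1)\cdots(a-r+1)/r!$. Define matrices $Q_{r+1}(rm)$, $r=0,1,2,\dots$, by $Q_1(0)=I$ and $Q_{r+1}(rm)=A_0Q_r((r-1)m)+Q_r((r-1)m)A_1$ for $r\ge1$. Define $Z(u)=\Theta$ for $u\in\mathbb{Z}_{-\infty}^{-m-1}$, $Z(u)=I$ for $u\in\mathbb{Z}_{-m}^{0}$, and for each integer $n\ge1$ and $u\in\mathbb{Z}_{(n-1)(m+1)+1}^{n(m+1)}$,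 \[ Z(u)=\sum_{r=0}^{n}\binom{u-(r-1)m}{r}Q_{r+1}(rm). \] *)

theory Defs
  imports "HOL-Analysis.Analysis"
begin

text \<open>Qm A0 A1 r is the matrix Q_{r+1}(r m) of the paper:
  Q_1(0) = I, Q_{r+1}(r m) = A0 Q_r((r-1)m) + Q_r((r-1)m) A1.\<close>
fun Qm :: "real^'d^'d \<Rightarrow> real^'d^'d \<Rightarrow> nat \<Rightarrow> real^'d^'d" where
  "Qm A0 A1 0 = mat 1"
| "Qm A0 A1 (Suc r) = A0 ** Qm A0 A1 r + Qm A0 A1 r ** A1"

text \<open>For u \<ge> 1 the block index n is the unique n \<ge> 1 with
  (n-1)(m+1)+1 \<le> u \<le> n(m+1), i.e. n = (u-1) div (m+1) + 1. The generalized binomial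
  coefficient a(a-1)...(a-r+1)/r! for integer a is (real a) gchoose r.\<close>
definition Zm :: "nat \<Rightarrow> real^'d^'d \<Rightarrow> real^'d^'d \<Rightarrow> int \<Rightarrow> real^'d^'d" where
  "Zm m A0 A1 u =
     (if u < - int m then 0
      else if u \<le> 0 then mat 1
      else (let n = nat ((u - 1) div (int m + 1) + 1) in
        \<Sum>r\<le>n. (of_int (u - (int r - 1) * int m) gchoose r) *\<^sub>R Qm A0 A1 r))"

end

theory Submission
  imports Defs
begin
lemma mm_sum_left:
  fixes A :: "real^'n^'m"
  shows "A ** sum f S = (\<Sum>x\<in>S. A ** f x)"
  by (induction S rule: infinite_finite_induct) (auto simp: matrix_add_ldistrib)

lemma mm_add_r: "((B::real^'n^'m) + C) ** (A::real^'p^'n) = B ** A + C ** A"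
  by (vector matrix_matrix_mult_def sum.distrib[symmetric] field_simps)

lemma mm_sum_right:
  fixes A :: "real^'p^'n"
  shows "sum f S ** A = (\<Sum>x\<in>S. f x ** A)"
  by (induction S rule: infinite_finite_induct) (auto simp: mm_add_r)

lemma mm_scaleR_l: "(c *\<^sub>R (B::real^'n^'m)) ** (A::real^'p^'n) = c *\<^sub>R (B ** A)"
  by (vector matrix_matrix_mult_def sum_distrib_left field_simps)

lemma mm_scaleR_r: "(A::real^'n^'m) ** (c *\<^sub>R (B::real^'p^'n)) = c *\<^sub>R (A ** B)"
  by (vector matrix_matrix_mult_def sum_distrib_left field_simps)

lemma mm_diff_l: "(A::real^'n^'m) ** (B - C) = A ** B - A ** (C::real^'p^'n)"
  by (vector matrix_matrix_mult_def sum_subtractf[symmetric] field_simps)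

lemma mm_diff_r: "((B::real^'n^'m) - C) ** (A::real^'p^'n) = B ** A - C ** A"
  by (vector matrix_matrix_mult_def sum_subtractf[symmetric] field_simps)

definition cf :: "nat \<Rightarrow> int \<Rightarrow> nat \<Rightarrow> real" where
  "cf m u r = (if int r * (int m + 1) \<le> u + int m
      then of_int (u - (int r - 1) * int m) gchoose r else 0)"

lemma div_le_iff_int: "(M::int) > 0 \<Longrightarrow> (r \<le> j div M) = (r * M \<le> j)"
proof -
  assume M: "M > 0"
  have d: "j = (j div M) * M + j mod M" by simp
  have m: "0 \<le> j mod M" "j mod M < M" using M by auto
  show ?thesis
  proof
    assume "r \<le> j div M"
    then have "r * M \<le> (j div M) * M" using M by (simp add: mult_right_mono)
    then show "r * M \<le> j" using d m by linarith
  next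
    assume h: "r * M \<le> j"
    show "r \<le> j div M"
    proof (rule ccontr)
      assume "\<not> r \<le> j div M"
      then have "(j div M + 1) * M \<le> r * M" using M by (simp add: mult_right_mono)
      moreover have "(j div M + 1) * M = (j div M) * M + M" by (simp add: algebra_simps)
      ultimately show False using d m h by linarith
    qed
  qed
qed
lemma Zrep:
  assumes "u \<ge> - int m" "nat (u + int m) \<le> K"
  shows "Zm m A0 A1 u = (\<Sum>r\<le>K. cf m u r *\<^sub>R Qm A0 A1 r)"
proof (cases "u \<le> 0")
  case True
  have "(\<Sum>r\<le>K. cf m u r *\<^sub>R Qm A0 A1 r) = (\<Sum>r\<le>K. if r = 0 then mat 1 else 0)"
  proof (rule sum.cong)
    fix r assume "r \<in> {..K}"
    show "cf m u r *\<^sub>R Qm A0 A1 r = (if r = 0 then mat 1 else 0)"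
    proof (cases "r = 0")
      case False
      then have "int r * (int m + 1) > u + int m" using True
        by (smt (verit, best) mult_le_cancel_right1 of_nat_0_le_iff of_nat_le_0_iff)
      then show ?thesis using False by (simp add: cf_def)
    qed (use assms in \<open>simp add: cf_def\<close>)
  qed simp
  also have "\<dots> = mat 1" by (simp add: sum.delta)
  finally show ?thesis using True assms by (simp add: Zm_def)
next
  case False
  define n where "n = nat ((u - 1) div (int m + 1) + 1)"
  have n': "int n = (u + int m) div (int m + 1)"
  proof -
    have "(u + int m) div (int m + 1) = (u - 1) div (int m + 1) + 1"
      using div_add_self2[of "int m + 1" "u - 1"] by (simp add: algebra_simps)
    moreover have "(u - 1) div (int m + 1) \<ge> 0" using False by (simp add: pos_imp_zdiv_nonneg_iff)
    ultimately show ?thesis by (simp add: n_def)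
  qed
  have iff: "r \<le> n \<longleftrightarrow> int r * (int m + 1) \<le> u + int m" for r
    using div_le_iff_int[of "int m + 1" "int r" "u + int m"] n' by linarith
  have "n \<le> K"
  proof -
    have "int n * (int m + 1) \<le> u + int m" using iff by blast
    then have "int n \<le> u + int m" by (smt (verit) mult_le_cancel_left1 of_nat_0_le_iff)
    then show ?thesis using assms by linarith
  qed
  have "(\<Sum>r\<le>K. cf m u r *\<^sub>R Qm A0 A1 r) = (\<Sum>r\<le>K. if r \<le> n then
       (of_int (u - (int r - 1) * int m) gchoose r) *\<^sub>R Qm A0 A1 r else 0)"
    by (rule sum.cong) (auto simp: cf_def iff)
  also have "\<dots> = (\<Sum>r\<in>{..K} \<inter> {r. r \<le> n}.
       (of_int (u - (int r - 1) * int m) gchoose r) *\<^sub>R Qm A0 A1 r)"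
    by (subst sum.inter_restrict) (simp_all del: of_int_diff of_int_mult)
  also have "{..K} \<inter> {r. r \<le> n} = {..n}" using \<open>n \<le> K\<close> by auto
  finally show ?thesis using False assms by (simp add: Zm_def n_def Let_def)
qed

lemma coef:
  assumes "v \<ge> 0"
  shows "cf m (v + 1) (Suc r) - cf m v (Suc r) = cf m (v - int m) r"
proof -
  define a where "a = v - int r * int m"
  have e1: "cf m (v + 1) (Suc r) = (if int r * (int m + 1) \<le> v then (of_int a + 1) gchoose (Suc r) else 0)"
    unfolding cf_def a_def by (auto simp: algebra_simps)
  have e2: "cf m v (Suc r) = (if int r * (int m + 1) < v then of_int a gchoose (Suc r) else 0)"
    unfolding cf_def a_def by (auto simp: algebra_simps)
  have e3: "cf m (v - int m) r = (if int r * (int m + 1) \<le> v then of_int a gchoose r else 0)"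
    unfolding cf_def a_def by (auto simp: algebra_simps)
  show ?thesis
  proof (cases "int r * (int m + 1) < v")
    case True
    then show ?thesis using e1 e2 e3 gbinomial_Suc_Suc[of "of_int a :: real" r] by simp
  next
    case False
    show ?thesis
    proof (cases "int r * (int m + 1) = v")
      case True
      then have "a = int r" unfolding a_def by (simp add: algebra_simps)
      then have "(of_int a :: real) gchoose Suc r = 0"
        using binomial_gbinomial[of r "Suc r", where 'a=real] by (simp add: binomial_eq_0)
      then show ?thesis using e1 e2 e3 True gbinomial_Suc_Suc[of "of_int a :: real" r] by simp
    next
      case False
      then show ?thesis using e1 e2 e3 \<open>\<not> _ < v\<close> by simp
    qed
  qed
qed

lemma dZ:
  assumes "v \<ge> - int m"
  shows "Zm m A0 A1 (v + 1) - Zm m A0 A1 v = A0 ** Zm m A0 A1 (v - int m) + Zm m A0 A1 (v - int m) ** A1"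
proof (cases "v < 0")
  case True
  then show ?thesis using assms by (simp add: Zm_def)
next
  case False
  define K' where "K' = nat (v + 1 + int m)"
  let ?Q = "Qm A0 A1"
  have Z1: "Zm m A0 A1 (v + 1) = (\<Sum>r\<le>Suc K'. cf m (v + 1) r *\<^sub>R ?Q r)"
    using False by (intro Zrep) (auto simp: K'_def)
  have Z0: "Zm m A0 A1 v = (\<Sum>r\<le>Suc K'. cf m v r *\<^sub>R ?Q r)"
    using False by (intro Zrep) (auto simp: K'_def)
  have Zm': "Zm m A0 A1 (v - int m) = (\<Sum>r\<le>K'. cf m (v - int m) r *\<^sub>R ?Q r)"
    using False by (intro Zrep) (auto simp: K'_def)
  have "Zm m A0 A1 (v + 1) - Zm m A0 A1 v = (\<Sum>r\<le>Suc K'. (cf m (v + 1) r - cf m v r) *\<^sub>R ?Q r)"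
    unfolding Z1 Z0 by (simp add: sum_subtractf[symmetric] scaleR_left_diff_distrib)
  also have "\<dots> = (\<Sum>r\<le>K'. (cf m (v + 1) (Suc r) - cf m v (Suc r)) *\<^sub>R ?Q (Suc r))
       + (cf m (v + 1) 0 - cf m v 0) *\<^sub>R ?Q 0"
    by (subst sum.atMost_Suc_shift) simp
  also have "cf m (v + 1) 0 - cf m v 0 = 0" using False by (simp add: cf_def)
  also have "(\<Sum>r\<le>K'. (cf m (v + 1) (Suc r) - cf m v (Suc r)) *\<^sub>R ?Q (Suc r))
      = (\<Sum>r\<le>K'. cf m (v - int m) r *\<^sub>R (A0 ** ?Q r + ?Q r ** A1))"
    using False by (simp add: coef)
  also have "\<dots> = A0 ** Zm m A0 A1 (v - int m) + Zm m A0 A1 (v - int m) ** A1"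
    unfolding Zm' by (simp add: mm_sum_left mm_sum_right mm_scaleR_l mm_scaleR_r scaleR_add_right sum.distrib)
  finally show ?thesis by simp
qed

theorem theorem8:
  fixes m :: nat and A0 A1 :: "real^'d^'d" and G :: "nat \<Rightarrow> real^'d^'d"
    and X :: "int \<Rightarrow> real^'d^'d"
  assumes "m \<ge> 1"
    and "\<And>u. A1 ** G u = G u ** A1"
    and "\<And>u. u \<ge> - int m \<Longrightarrow>
           X u = (\<Sum>r\<in>{1..u}. Zm m A0 A1 (u - int m - r) ** G (nat (r - 1)))"
  shows "(\<forall>u\<ge>0. X (u + 1) - X u = A0 ** X (u - int m) + X (u - int m) ** A1 + G (nat u))
         \<and> (\<forall>u. - int m \<le> u \<and> u \<le> 0 \<longrightarrow> X u = 0)"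
proof (intro conjI allI impI)
  fix u :: int assume u: "- int m \<le> u \<and> u \<le> 0"
  then show "X u = 0" using assms(3)[of u] by simp
next
  fix u :: int assume u: "u \<ge> 0"
  let ?Z = "Zm m A0 A1"
  define h where "h r = (A0 ** ?Z (u - int m - int m - r) + ?Z (u - int m - int m - r) ** A1) ** G (nat (r - 1))" for r
  have "{1..u+1} = insert (u+1) {1..u}" using u by auto
  then have "X (u + 1) = ?Z (- int m) ** G (nat u) + (\<Sum>r\<in>{1..u}. ?Z (u + 1 - int m - r) ** G (nat (r - 1)))"
    using assms(3)[of "u+1"] u by simp
  also have "?Z (- int m) = mat 1" by (simp add: Zm_def)
  finally have X1: "X (u + 1) = G (nat u) + (\<Sum>r\<in>{1..u}. ?Z (u + 1 - int m - r) ** G (nat (r - 1)))"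
    by simp
  have X0: "X u = (\<Sum>r\<in>{1..u}. ?Z (u - int m - r) ** G (nat (r - 1)))"
    using assms(3)[of u] u by simp
  have "X (u + 1) - X u = G (nat u) + (\<Sum>r\<in>{1..u}. (?Z (u + 1 - int m - r) - ?Z (u - int m - r)) ** G (nat (r - 1)))"
    unfolding X1 X0 by (simp add: sum_subtractf[symmetric] mm_diff_r)
  also have "(\<Sum>r\<in>{1..u}. (?Z (u + 1 - int m - r) - ?Z (u - int m - r)) ** G (nat (r - 1))) = sum h {1..u}"
  proof (rule sum.cong)
    fix r assume r: "r \<in> {1..u}"
    have "?Z (u - int m - r + 1) - ?Z (u - int m - r) = A0 ** ?Z (u - int m - r - int m) + ?Z (u - int m - r - int m) ** A1"
      using r by (intro dZ) auto
    moreover have "u - int m - r + 1 = u + 1 - int m - r" by simp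
    moreover have "u - int m - r - int m = u - int m - int m - r" by simp
    ultimately show "(?Z (u + 1 - int m - r) - ?Z (u - int m - r)) ** G (nat (r - 1)) = h r"
      unfolding h_def by simp
  qed simp
  also have "sum h {1..u} = sum h {1..u - int m}"
  proof (rule sum.mono_neutral_right)
    show "\<forall>i\<in>{1..u} - {1..u - int m}. h i = 0"
      by (auto simp: h_def Zm_def)
  qed auto
  also have "sum h {1..u - int m} = A0 ** X (u - int m) + X (u - int m) ** A1"
  proof -
    have Xm: "X (u - int m) = (\<Sum>r\<in>{1..u - int m}. ?Z (u - int m - int m - r) ** G (nat (r - 1)))"
      using assms(3)[of "u - int m"] u by simp
    have hr: "h r = A0 ** (?Z (u - int m - int m - r) ** G (nat (r - 1))) + (?Z (u - int m - int m - r) ** G (nat (r - 1))) ** A1" for r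
    proof -
      have "?Z (u - int m - int m - r) ** A1 ** G (nat (r - 1)) = (?Z (u - int m - int m - r) ** G (nat (r - 1))) ** A1"
        by (metis assms(2) matrix_mul_assoc)
      then show ?thesis unfolding h_def
        by (simp only: mm_add_r matrix_mul_assoc)
    qed
    show ?thesis unfolding Xm hr
      by (simp only: sum.distrib mm_sum_left mm_sum_right)
  qed
  finally show "X (u + 1) - X u = A0 ** X (u - int m) + X (u - int m) ** A1 + G (nat u)"
    by (metis add.commute)
qed

end
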